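(* Let $b>0$, $\beta>0$, $\nu>0$, $\delta>0$, $\alpha>0$ and $p\in(0,1)$, and consider the system \[ S'=b(1-S-pI)-(\beta-\delta)SI+\alpha R,\qquad I'=\big(\beta S-((1-p)b+\nu+\delta)+\delta I\big)I,\qquad R'=\nu I-(b+\alpha-\delta I)R \] on the region $\mathcal{D}^{\mathrm{fra}}=\{(S,I,R): S\ge 0, I\ge 0, R\ge 0, S+I+R=1\}$. Let $\gamma=(1-p)b+\nu+\delta$ and $R_0=\beta/\gamma$. Then the disease-free equilibrium $E_0=(1,0,0)$ is globally asymptotically stable in $\mathcal{D}^{\mathrm{fra}}$ if and only if $R_0\le 1$, and $E_0$ is unstable when $R_0>1$.
   Context: The variables $S,I,R$ are the fractions of susceptible, infectious and recovered individuals in an SIRS model with vertical transmission (fraction $p$ of newborns of infectives infected), birth rate $b$, transmission rate $\beta$, recovery rate $\nu$, disease-induced death rate $\delta$, and rate $\alpha$ of loss of immunity. Globally asymptotically stable (GAS) in a region means Lyapunov stable and attracting every solution starting in that region. *)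

theory Defs
  imports "HOL-Analysis.Analysis"
begin

definition sirs_field ::
  "real \<Rightarrow> real \<Rightarrow> real \<Rightarrow> real \<Rightarrow> real \<Rightarrow> real \<Rightarrow> real \<times> real \<times> real \<Rightarrow> real \<times> real \<times> real" where
  "sirs_field b beta nu delta alpha p x =
     (case x of (S, I, R) \<Rightarrow>
       (b * (1 - S - p * I) - (beta - delta) * S * I + alpha * R,
        (beta * S - ((1 - p) * b + nu + delta) + delta * I) * I,
        nu * I - (b + alpha - delta * I) * R))"

definition D_fra :: "(real \<times> real \<times> real) set" where
  "D_fra = {(S, I, R). S \<ge> 0 \<and> I \<ge> 0 \<and> R \<ge> 0 \<and> S + I + R = 1}"

definition is_solution ::
  "(('a::real_normed_vector) \<Rightarrow> 'a) \<Rightarrow> (real \<Rightarrow> 'a) \<Rightarrow> bool" where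
  "is_solution F x \<longleftrightarrow>
     (\<forall>t\<ge>0. (x has_vector_derivative F (x t)) (at t within {0..}))"

definition lyapunov_stable_in ::
  "(('a::real_normed_vector) \<Rightarrow> 'a) \<Rightarrow> 'a set \<Rightarrow> 'a \<Rightarrow> bool" where
  "lyapunov_stable_in F D e \<longleftrightarrow>
     (\<forall>\<epsilon>>0. \<exists>\<eta>>0. \<forall>x. is_solution F x \<and> x 0 \<in> D \<and> dist (x 0) e < \<eta> \<longrightarrow>
        (\<forall>t\<ge>0. dist (x t) e < \<epsilon>))"

definition attracting_in ::
  "(('a::real_normed_vector) \<Rightarrow> 'a) \<Rightarrow> 'a set \<Rightarrow> 'a \<Rightarrow> bool" where
  "attracting_in F D e \<longleftrightarrow>
     (\<forall>x. is_solution F x \<and> x 0 \<in> D \<longrightarrow> (x \<longlongrightarrow> e) at_top)"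

definition GAS_in ::
  "(('a::real_normed_vector) \<Rightarrow> 'a) \<Rightarrow> 'a set \<Rightarrow> 'a \<Rightarrow> bool" where
  "GAS_in F D e \<longleftrightarrow> lyapunov_stable_in F D e \<and> attracting_in F D e"

end

theory Submission
  imports Defs
begin




lemma nonneg_lemma:
  fixes u u' :: "real \<Rightarrow> real" and T :: real
  assumes cont: "continuous_on {0..<T} u"
  and der: "\<And>t. 0 < t \<Longrightarrow> t < T \<Longrightarrow> (u has_real_derivative u' t) (at t)"
  and u0: "u 0 \<ge> 0"
  and loc: "\<And>t0. 0 \<le> t0 \<Longrightarrow> t0 < T \<Longrightarrow> u t0 = 0 \<Longrightarrow>
      \<exists>d>0. \<exists>K. \<forall>t. t0 < t \<and> t < t0 + d \<and> t < T \<and> u t < 0 \<longrightarrow> u' t \<ge> K * u t"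
  and t: "0 \<le> t1" "t1 < T"
  shows "u t1 \<ge> 0"
proof (rule ccontr)
  assume neg: "\<not> u t1 \<ge> 0"
  hence neg: "u t1 < 0" by simp
  define Z where "Z = {0..t1} \<inter> u -` {0..}"
  have c1: "continuous_on {0..t1} u" using t by (intro continuous_on_subset[OF cont]) auto
  have clZ: "closed Z" unfolding Z_def by (rule continuous_closed_preimage[OF c1]) auto
  have Z0: "0 \<in> Z" using u0 t unfolding Z_def by auto
  have bdd: "bdd_above Z" unfolding Z_def by (auto intro: bdd_aboveI[where M=t1])
  define t0 where "t0 = Sup Z"
  have t0Z: "t0 \<in> Z" unfolding t0_def using closed_contains_Sup[OF _ bdd clZ] Z0 by auto
  have le: "\<And>s. s \<in> Z \<Longrightarrow> s \<le> t0" unfolding t0_def using bdd by (simp add: cSup_upper)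
  have t0r: "0 \<le> t0" "t0 \<le> t1" "u t0 \<ge> 0" using t0Z unfolding Z_def by auto
  have t0lt: "t0 < t1" using t0r neg by (metis order_le_less not_le)
  have after: "\<And>s. t0 < s \<Longrightarrow> s \<le> t1 \<Longrightarrow> u s < 0"
  proof (rule ccontr)
    fix s assume "t0 < s" "s \<le> t1" "\<not> u s < 0"
    hence "s \<in> Z" unfolding Z_def using t0r by auto
    with le \<open>t0 < s\<close> show False by force
  qed
  have ut0: "u t0 = 0"
  proof -
    have c2: "continuous_on {t0..t1} u" using t0r by (intro continuous_on_subset[OF c1]) auto
    obtain s where s: "t0 \<le> s" "s \<le> t1" "u s = 0"
      using IVT2'[of u t1 0 t0] c2 t0r neg t0lt by auto
    have "s \<in> Z" unfolding Z_def using s t0r by auto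
    hence "s = t0" using le s by force
    thus ?thesis using s by simp
  qed
  obtain d K where d: "d > 0" and K: "\<And>t. t0 < t \<Longrightarrow> t < t0 + d \<Longrightarrow> t < T \<Longrightarrow> u t < 0 \<Longrightarrow> u' t \<ge> K * u t"
    using loc[OF t0r(1) _ ut0] t0lt t by force
  define t2 where "t2 = min t1 (t0 + d/2)"
  have t2: "t0 < t2" "t2 \<le> t1" "t2 < t0 + d" using t0lt d unfolding t2_def by auto
  define v where "v = (\<lambda>t. u t * exp (- K * t))"
  have "v t0 \<le> v t2"
  proof (rule DERIV_nonneg_imp_increasing_open[of t0 t2 v])
    show "t0 \<le> t2" using t2 by simp
    fix x assume x: "t0 < x" "x < t2"
    have "(v has_real_derivative (u' x * exp (- K * x) + u x * (exp (- K * x) * (- K)))) (at x)"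
      unfolding v_def using der[of x] x t0r t2 t
      by (auto intro!: derivative_eq_intros)
    moreover have "u' x * exp (- K * x) + u x * (exp (- K * x) * (- K)) \<ge> 0"
    proof -
      have "u x < 0" using after x t2 by auto
      hence "u' x \<ge> K * u x" using K x t2 t by auto
      hence "(u' x - K * u x) * exp (- K * x) \<ge> 0" by simp
      thus ?thesis by (simp add: algebra_simps)
    qed
    ultimately show "\<exists>y. (v has_real_derivative y) (at x) \<and> y \<ge> 0" by blast
  next
    show "continuous_on {t0..t2} v" unfolding v_def
      using continuous_on_subset[OF c1, of "{t0..t2}"] t0r t2
      by (auto intro!: continuous_intros)
  qed
  moreover have "v t0 = 0" unfolding v_def using ut0 by simp
  moreover have "v t2 < 0" unfolding v_def using after[of t2] t2 by (simp add: mult_neg_pos)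
  ultimately show False by simp
qed


lemma nonneg_lin:
  fixes u u' k w :: "real \<Rightarrow> real" and T :: real
  assumes cont: "continuous_on {0..<T} u"
  and der: "\<And>t. 0 < t \<Longrightarrow> t < T \<Longrightarrow> (u has_real_derivative u' t) (at t)"
  and u0: "u 0 \<ge> 0"
  and kc: "continuous_on {0..<T} k"
  and wloc: "\<And>t0. 0 \<le> t0 \<Longrightarrow> t0 < T \<Longrightarrow> u t0 = 0 \<Longrightarrow> \<exists>d>0. \<forall>t. t0 < t \<and> t < t0 + d \<and> t < T \<longrightarrow> w t \<ge> 0"
  and ineq: "\<And>t. 0 < t \<Longrightarrow> t < T \<Longrightarrow> u t < 0 \<Longrightarrow> u' t \<ge> k t * u t + w t"
  and t: "0 \<le> t1" "t1 < T"
  shows "u t1 \<ge> 0"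
proof (rule nonneg_lemma[OF cont der u0 _ t])
  fix t0 assume t0: "0 \<le> t0" "t0 < T" "u t0 = 0"
  obtain d2 where d2: "d2 > 0" "\<And>t. t0 < t \<Longrightarrow> t < t0 + d2 \<Longrightarrow> t < T \<Longrightarrow> w t \<ge> 0"
    using wloc[OF t0] by blast
  obtain d1 where d1: "d1 > 0" "\<And>t. t \<in> {0..<T} \<Longrightarrow> dist t t0 < d1 \<Longrightarrow> dist (k t) (k t0) < 1"
    using kc t0 unfolding continuous_on_iff by (metis atLeastLessThan_iff zero_less_one)
  show "\<exists>d>0. \<exists>K. \<forall>t. t0 < t \<and> t < t0 + d \<and> t < T \<and> u t < 0 \<longrightarrow> u' t \<ge> K * u t"
  proof -
  have "\<forall>t. t0 < t \<and> t < t0 + min d1 d2 \<and> t < T \<and> u t < 0 \<longrightarrow> u' t \<ge> (\<bar>k t0\<bar> + 1) * u t"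
  proof (intro allI impI)
    fix t assume h: "t0 < t \<and> t < t0 + min d1 d2 \<and> t < T \<and> u t < 0"
    have "dist (k t) (k t0) < 1" using d1(2)[of t] h t0 by (auto simp: dist_real_def)
    hence kb: "k t \<le> \<bar>k t0\<bar> + 1" by (auto simp: dist_real_def)
    have "w t \<ge> 0" using d2(2)[of t] h by auto
    moreover have "k t * u t \<ge> (\<bar>k t0\<bar> + 1) * u t" using kb h by (intro mult_right_mono_neg) auto
    moreover have "u' t \<ge> k t * u t + w t" using ineq[of t] h t0 by auto
    ultimately show "u' t \<ge> (\<bar>k t0\<bar> + 1) * u t" by linarith
  qed
  moreover have "min d1 d2 > 0" using d1 d2 by simp
  ultimately show ?thesis by blast
  qed
qed

lemma vd_fst: "(f has_vector_derivative v) F \<Longrightarrow> ((\<lambda>t. fst (f t)) has_vector_derivative fst v) F"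
  unfolding has_vector_derivative_def by (drule has_derivative_fst) simp

lemma vd_snd: "(f has_vector_derivative v) F \<Longrightarrow> ((\<lambda>t. snd (f t)) has_vector_derivative snd v) F"
  unfolding has_vector_derivative_def by (drule has_derivative_snd) simp

lemma sol_comps:
  fixes x :: "real \<Rightarrow> real \<times> real \<times> real"
  assumes "(x has_vector_derivative sirs_field b beta nu delta alpha p (x t)) (at t)"
  defines "S \<equiv> \<lambda>t. fst (x t)" and "I \<equiv> \<lambda>t. fst (snd (x t))" and "R \<equiv> \<lambda>t. snd (snd (x t))"
  shows "(S has_real_derivative (b * (1 - S t - p * I t) - (beta - delta) * S t * I t + alpha * R t)) (at t)"
    "(I has_real_derivative ((beta * S t - ((1 - p) * b + nu + delta) + delta * I t) * I t)) (at t)"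
    "(R has_real_derivative (nu * I t - (b + alpha - delta * I t) * R t)) (at t)"
proof -
  have e: "sirs_field b beta nu delta alpha p (x t) = (b * (1 - S t - p * I t) - (beta - delta) * S t * I t + alpha * R t,
     (beta * S t - ((1 - p) * b + nu + delta) + delta * I t) * I t, nu * I t - (b + alpha - delta * I t) * R t)"
    unfolding sirs_field_def S_def I_def R_def by (simp split: prod.split)
  note a = assms(1)[unfolded e]
  show "(S has_real_derivative (b * (1 - S t - p * I t) - (beta - delta) * S t * I t + alpha * R t)) (at t)"
    using vd_fst[OF a] unfolding S_def has_real_derivative_iff_has_vector_derivative by simp
  show "(I has_real_derivative ((beta * S t - ((1 - p) * b + nu + delta) + delta * I t) * I t)) (at t)"
    using vd_fst[OF vd_snd[OF a]] unfolding I_def has_real_derivative_iff_has_vector_derivative by simp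
  show "(R has_real_derivative (nu * I t - (b + alpha - delta * I t) * R t)) (at t)"
    using vd_snd[OF vd_snd[OF a]] unfolding R_def has_real_derivative_iff_has_vector_derivative by simp
qed


lemma invariance:
  fixes x :: "real \<Rightarrow> real \<times> real \<times> real"
  assumes pars: "b > 0" "nu \<ge> 0" "alpha \<ge> 0" "0 \<le> p" "p < 1"
  and cx: "continuous_on {0..<T} x"
  and dx: "\<And>t. 0 < t \<Longrightarrow> t < T \<Longrightarrow> (x has_vector_derivative sirs_field b beta nu delta alpha p (x t)) (at t)"
  and x0: "x 0 \<in> D_fra"
  and t: "0 \<le> t1" "t1 < T"
  shows "x t1 \<in> D_fra"
proof -
  define S where "S = (\<lambda>t. fst (x t))"
  define I where "I = (\<lambda>t. fst (snd (x t)))"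
  define R where "R = (\<lambda>t. snd (snd (x t)))"
  have xe: "\<And>t. x t = (S t, I t, R t)" unfolding S_def I_def R_def by simp
  have cS: "continuous_on {0..<T} S" unfolding S_def by (intro continuous_intros cx)
  have cI: "continuous_on {0..<T} I" unfolding I_def by (intro continuous_intros cx)
  have cR: "continuous_on {0..<T} R" unfolding R_def by (intro continuous_intros cx)
  have dd: "\<And>t. 0 < t \<Longrightarrow> t < T \<Longrightarrow> (S has_real_derivative (b * (1 - S t - p * I t) - (beta - delta) * S t * I t + alpha * R t)) (at t)"
    "\<And>t. 0 < t \<Longrightarrow> t < T \<Longrightarrow> (I has_real_derivative ((beta * S t - ((1 - p) * b + nu + delta) + delta * I t) * I t)) (at t)"
    "\<And>t. 0 < t \<Longrightarrow> t < T \<Longrightarrow> (R has_real_derivative (nu * I t - (b + alpha - delta * I t) * R t)) (at t)"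
    using sol_comps[OF dx] unfolding S_def I_def R_def by auto
  have X0: "S 0 \<ge> 0" "I 0 \<ge> 0" "R 0 \<ge> 0" "S 0 + I 0 + R 0 = 1"
    using x0 unfolding D_fra_def xe by auto
  have Ipos: "\<And>t. 0 \<le> t \<Longrightarrow> t < T \<Longrightarrow> I t \<ge> 0"
  proof -
    fix t assume "0 \<le> t" "t < T"
    show "I t \<ge> 0"
      by (rule nonneg_lin[OF cI dd(2) X0(2), where k="\<lambda>t. beta * S t - ((1 - p) * b + nu + delta) + delta * I t"
          and w="\<lambda>t. 0"]) (auto intro!: continuous_intros cS cI cx intro: exI[of _ 1] simp: \<open>0 \<le> t\<close> \<open>t < T\<close> S_def I_def)
  qed
  have Rpos: "\<And>t. 0 \<le> t \<Longrightarrow> t < T \<Longrightarrow> R t \<ge> 0"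
  proof -
    fix t assume "0 \<le> t" "t < T"
    show "R t \<ge> 0"
    proof (rule nonneg_lin[OF cR dd(3) X0(3), where k="\<lambda>t. - (b + alpha - delta * I t)"
          and w="\<lambda>t. nu * I t"])
      show "continuous_on {0..<T} (\<lambda>t. - (b + alpha - delta * I t))" by (intro continuous_intros cI)
      fix t0 assume "0 \<le> t0" "t0 < T" 
      show "\<exists>d>0. \<forall>t. t0 < t \<and> t < t0 + d \<and> t < T \<longrightarrow> nu * I t \<ge> 0"
        using Ipos pars \<open>0 \<le> t0\<close> by (intro exI[of _ 1]) auto
    qed (auto simp: \<open>0 \<le> t\<close> \<open>t < T\<close> algebra_simps S_def I_def R_def)
  qed
  have Nd: "\<And>t. 0 < t \<Longrightarrow> t < T \<Longrightarrow> ((\<lambda>t. 1 - (S t + I t + R t)) has_real_derivative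
      (- (b - delta * I t)) * (1 - (S t + I t + R t))) (at t)"
  proof -
    fix t assume "0 < t" "t < T"
    have "((\<lambda>t. 1 - (S t + I t + R t)) has_real_derivative
      - ((b * (1 - S t - p * I t) - (beta - delta) * S t * I t + alpha * R t) +
         ((beta * S t - ((1 - p) * b + nu + delta) + delta * I t) * I t) +
         (nu * I t - (b + alpha - delta * I t) * R t))) (at t)"
      using dd[OF \<open>0 < t\<close> \<open>t < T\<close>] by (auto intro!: derivative_eq_intros)
    moreover have "- ((b * (1 - S t - p * I t) - (beta - delta) * S t * I t + alpha * R t) +
         ((beta * S t - ((1 - p) * b + nu + delta) + delta * I t) * I t) +
         (nu * I t - (b + alpha - delta * I t) * R t)) = (- (b - delta * I t)) * (1 - (S t + I t + R t))"
      by (simp add: algebra_simps)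
    ultimately show "((\<lambda>t. 1 - (S t + I t + R t)) has_real_derivative
      (- (b - delta * I t)) * (1 - (S t + I t + R t))) (at t)" by simp
  qed
  have cN: "continuous_on {0..<T} (\<lambda>t. 1 - (S t + I t + R t))" by (intro continuous_intros cS cI cR)
  have ck: "continuous_on {0..<T} (\<lambda>t. - (b - delta * I t))" by (intro continuous_intros cI)
  have N: "\<And>t. 0 \<le> t \<Longrightarrow> t < T \<Longrightarrow> S t + I t + R t = 1"
  proof -
    fix t assume t: "0 \<le> t" "t < T"
    have "1 - (S t + I t + R t) \<ge> 0"
      by (rule nonneg_lin[OF cN Nd _ ck, where w="\<lambda>t. 0"]) (use X0 t in \<open>auto intro: exI[of _ 1]\<close>)
    moreover have "- (1 - (S t + I t + R t)) \<ge> 0"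
    proof (rule nonneg_lin[where u="\<lambda>t. - (1 - (S t + I t + R t))" and k="\<lambda>t. - (b - delta * I t)" and w="\<lambda>t. 0"])
      show "continuous_on {0..<T} (\<lambda>t. - (1 - (S t + I t + R t)))" by (intro continuous_intros cS cI cR)
      fix t assume "0 < t" "t < T"
      show "((\<lambda>t. - (1 - (S t + I t + R t))) has_real_derivative
          - ((- (b - delta * I t)) * (1 - (S t + I t + R t)))) (at t)"
        using DERIV_minus[OF Nd[OF \<open>0 < t\<close> \<open>t < T\<close>]] by simp
    qed (use X0 t ck in \<open>auto intro: exI[of _ 1] simp: algebra_simps\<close>)
    ultimately show "S t + I t + R t = 1" by linarith
  qed
  have Spos: "S t1 \<ge> 0"
  proof (rule nonneg_lin[OF cS dd(1) X0(1), where k="\<lambda>t. - (b + (beta - delta) * I t)"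
          and w="\<lambda>t. b * (1 - p * I t) + alpha * R t"])
    show "continuous_on {0..<T} (\<lambda>t. - (b + (beta - delta) * I t))" by (intro continuous_intros cI)
    fix t0 assume t0: "0 \<le> t0" "t0 < T" "S t0 = 0"
    have cw: "continuous_on {0..<T} (\<lambda>t. b * (1 - p * I t) + alpha * R t)" by (intro continuous_intros cI cR)
    have "I t0 \<le> 1" using N[OF t0(1,2)] t0 Rpos[OF t0(1,2)] by simp
    hence "p * I t0 \<le> p" using pars by (simp add: mult_left_le)
    hence "1 - p * I t0 > 0" using pars by linarith
    hence "b * (1 - p * I t0) > 0" using pars by simp
    moreover have "alpha * R t0 \<ge> 0" using pars Rpos[OF t0(1,2)] by simp
    ultimately have w0: "b * (1 - p * I t0) + alpha * R t0 > 0" by linarith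
    obtain d where d: "d > 0" "\<And>t. t \<in> {0..<T} \<Longrightarrow> dist t t0 < d \<Longrightarrow>
        dist (b * (1 - p * I t) + alpha * R t) (b * (1 - p * I t0) + alpha * R t0) < b * (1 - p * I t0) + alpha * R t0"
      using cw t0 w0 unfolding continuous_on_iff by (metis atLeastLessThan_iff)
    show "\<exists>d>0. \<forall>t. t0 < t \<and> t < t0 + d \<and> t < T \<longrightarrow> b * (1 - p * I t) + alpha * R t \<ge> 0"
    proof (intro exI[of _ d] conjI allI impI)
      fix t assume "t0 < t \<and> t < t0 + d \<and> t < T"
      hence "dist (b * (1 - p * I t) + alpha * R t) (b * (1 - p * I t0) + alpha * R t0) < b * (1 - p * I t0) + alpha * R t0"
        using d(2)[of t] t0 by (auto simp: dist_real_def)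
      thus "b * (1 - p * I t) + alpha * R t \<ge> 0" by (auto simp: dist_real_def)
    qed (rule d(1))
  qed (auto simp: t algebra_simps S_def I_def R_def)
  show ?thesis unfolding D_fra_def xe using Spos Ipos[OF t] Rpos[OF t] N[OF t] by auto
qed


lemma sol_basic:
  assumes "is_solution F x"
  shows "continuous_on {0..} x" "\<And>t. 0 < t \<Longrightarrow> (x has_vector_derivative F (x t)) (at t)"
proof -
  show "continuous_on {0..} x" unfolding continuous_on_eq_continuous_within
    using assms has_vector_derivative_continuous unfolding is_solution_def by blast
  fix t :: real assume "0 < t"
  hence "at t within {0..} = at t" by (intro at_within_interior) simp
  moreover have "(x has_vector_derivative F (x t)) (at t within {0..})" using assms \<open>0 < t\<close> unfolding is_solution_def by auto
  ultimately show "(x has_vector_derivative F (x t)) (at t)" by simp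
qed

lemma sol_inv:
  assumes pars: "b > 0" "nu \<ge> 0" "alpha \<ge> 0" "0 \<le> p" "p < 1"
  and sol: "is_solution (sirs_field b beta nu delta alpha p) x" and x0: "x 0 \<in> D_fra" and t: "t \<ge> 0"
  shows "x t \<in> D_fra"
proof (rule invariance[where T="t+1" and x=x and beta=beta and delta=delta, OF pars _ _ x0])
  show "continuous_on {0..<t + 1} x" using sol_basic(1)[OF sol] by (rule continuous_on_subset) auto
qed (use sol_basic(2)[OF sol] t in auto)

lemma dist3: "dist (a::real, b::real, c::real) (a', b', c') \<le> \<bar>a - a'\<bar> + \<bar>b - b'\<bar> + \<bar>c - c'\<bar>"
proof -
  have "dist (a, b, c) (a', b', c') \<le> dist a a' + dist (b, c) (b', c')"
    unfolding dist_Pair_Pair[of a "(b,c)"] by (rule sqrt_sum_squares_le_sum) auto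
  moreover have "dist (b, c) (b', c') \<le> dist b b' + dist c c'"
    unfolding dist_Pair_Pair by (rule sqrt_sum_squares_le_sum) auto
  ultimately show ?thesis by (simp add: dist_real_def)
qed

lemma decr_lemma:
  fixes f f' :: "real \<Rightarrow> real"
  assumes "0 \<le> a" "a \<le> b" "continuous_on {0..} f"
    "\<And>t. 0 < t \<Longrightarrow> (f has_real_derivative f' t) (at t)" "\<And>t. a < t \<Longrightarrow> t < b \<Longrightarrow> f' t \<le> 0"
  shows "f b \<le> f a"
proof (rule DERIV_nonpos_imp_decreasing_open[OF assms(2)])
  show "continuous_on {a..b} f" using assms(3) by (rule continuous_on_subset) (use assms(1) in auto)
next
  fix x assume "a < x" "x < b"
  thus "\<exists>y. (f has_real_derivative y) (at x) \<and> y \<le> 0" using assms(1,4,5) by (intro exI[of _ "f' x"]) auto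
qed



lemma c_exists:
  fixes b beta nu delta p :: real
  assumes pars: "b > 0" "nu > 0" "delta > 0" "0 < p" "p < 1" "beta > 0"
  and le: "beta \<le> (1 - p) * b + nu + delta"
  shows "\<exists>c>0. \<forall>S I R. S \<ge> 0 \<and> I \<ge> 0 \<and> R \<ge> 0 \<and> S + I + R = 1 \<longrightarrow>
     beta * S - ((1 - p) * b + nu + delta) + delta * I \<le> - c * I"
proof -
  have bp: "(1 - p) * b > 0" using pars by simp
  show ?thesis
proof (cases "beta = (1 - p) * b + nu + delta")
  case True
  have pos: "(1 - p) * b + nu > 0" using pars bp by linarith
  show ?thesis
  proof (intro exI[of _ "(1 - p) * b + nu"] conjI allI impI)
    fix S I R :: real assume h: "S \<ge> 0 \<and> I \<ge> 0 \<and> R \<ge> 0 \<and> S + I + R = 1"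
    hence "S = 1 - I - R" by simp
    hence e1: "beta * S - beta + delta * I = - (beta - delta) * I - beta * R"
      by algebra
    have e2: "beta - delta = (1 - p) * b + nu" using True by simp
    have "beta * S - ((1 - p) * b + nu + delta) + delta * I = - ((1 - p) * b + nu) * I - beta * R"
      using e1 unfolding e2[symmetric] True[symmetric] by simp
    moreover have "beta * R \<ge> 0" using h pars by simp
    ultimately show "beta * S - ((1 - p) * b + nu + delta) + delta * I \<le> - ((1 - p) * b + nu) * I"
      by linarith
  qed (rule pos)
next
  case False
  define m where "m = max beta delta"
  have lt: "beta < (1 - p) * b + nu + delta" using le False by simp
  have "delta < (1 - p) * b + nu + delta" using pars bp by linarith
  hence cpos: "(1 - p) * b + nu + delta - m > 0" using lt unfolding m_def by simp
  show ?thesis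
  proof (intro exI[of _ "(1 - p) * b + nu + delta - m"] conjI allI impI)
    fix S I R :: real assume h: "S \<ge> 0 \<and> I \<ge> 0 \<and> R \<ge> 0 \<and> S + I + R = 1"
    have "beta * S + delta * I \<le> m * S + m * I" unfolding m_def using h
      by (intro add_mono mult_right_mono) auto
    also have "\<dots> = m * (S + I)" by (simp add: algebra_simps)
    also have "\<dots> \<le> m" using h pars unfolding m_def
      by (intro mult_left_le) auto
    finally have "beta * S + delta * I \<le> m" .
    moreover have "I \<le> 1" using h by simp
    hence "((1 - p) * b + nu + delta - m) * I \<le> (1 - p) * b + nu + delta - m"
      using cpos h by (simp add: mult_left_le)
    ultimately show "beta * S - ((1 - p) * b + nu + delta) + delta * I \<le> - ((1 - p) * b + nu + delta - m) * I"
      by (simp only: minus_mult_left)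
  qed (rule cpos)
qed
qed


locale sirs_sol =
  fixes b beta nu delta alpha p :: real and x :: "real \<Rightarrow> real \<times> real \<times> real" and S I R :: "real \<Rightarrow> real"
  assumes pars: "b > 0" "beta > 0" "nu > 0" "delta > 0" "alpha > 0" "0 < p" "p < 1"
  and sol: "is_solution (sirs_field b beta nu delta alpha p) x"
  and x0: "x 0 \<in> D_fra"
  and xe: "\<And>t. x t = (S t, I t, R t)"
begin

lemma Sdef: "S = (\<lambda>t. fst (x t))" and Idef: "I = (\<lambda>t. fst (snd (x t)))" and Rdef: "R = (\<lambda>t. snd (snd (x t)))"
  by (auto simp: xe)

lemma inD: assumes "t \<ge> 0" shows "S t \<ge> 0" "I t \<ge> 0" "R t \<ge> 0" "S t + I t + R t = 1"
  using sol_inv[OF _ _ _ _ _ sol x0 assms] pars unfolding xe D_fra_def by auto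

lemma cx: "continuous_on {0..} x" using sol_basic(1)[OF sol] .

lemma cS: "continuous_on {0..} S" unfolding Sdef by (intro continuous_intros cx)
lemma cI: "continuous_on {0..} I" unfolding Idef by (intro continuous_intros cx)
lemma cR: "continuous_on {0..} R" unfolding Rdef by (intro continuous_intros cx)

lemma dS: "0 < t \<Longrightarrow> (S has_real_derivative (b * (1 - S t - p * I t) - (beta - delta) * S t * I t + alpha * R t)) (at t)"
  using sol_comps(1)[OF sol_basic(2)[OF sol]] unfolding Sdef Idef Rdef by auto
lemma dI: "0 < t \<Longrightarrow> (I has_real_derivative ((beta * S t - ((1 - p) * b + nu + delta) + delta * I t) * I t)) (at t)"
  using sol_comps(2)[OF sol_basic(2)[OF sol]] unfolding Sdef Idef Rdef by auto
lemma dR: "0 < t \<Longrightarrow> (R has_real_derivative (nu * I t - (b + alpha - delta * I t) * R t)) (at t)"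
  using sol_comps(3)[OF sol_basic(2)[OF sol]] unfolding Sdef Idef Rdef by auto

lemma R_bound:
  assumes t0: "t0 \<ge> 0" and k: "k > 0" and Ie: "\<And>t. t \<ge> t0 \<Longrightarrow> I t \<le> e"
    and ke: "b + alpha - delta * e \<ge> k" and t: "t \<ge> t0"
  shows "R t \<le> nu * e / k + R t0 * exp (- k * (t - t0))"
proof -
  define A where "A = nu * e / k"
  have e0: "e \<ge> 0" using Ie[of t0] inD(2)[OF t0] by simp
  have A0: "A \<ge> 0" unfolding A_def using e0 k pars by simp
  define v where "v = (\<lambda>s. (R s - A) * exp (k * s))"
  have "v t \<le> v t0"
  proof (rule decr_lemma[OF t0 t, where f' = "\<lambda>s. (nu * I s - (b + alpha - delta * I s) * R s) * exp (k * s) + (R s - A) * (exp (k * s) * k)"])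
    show "continuous_on {0..} v" unfolding v_def by (intro continuous_intros cR)
    fix s :: real assume "0 < s"
    thus "(v has_real_derivative (nu * I s - (b + alpha - delta * I s) * R s) * exp (k * s) + (R s - A) * (exp (k * s) * k)) (at s)"
      unfolding v_def by (auto intro!: derivative_eq_intros dR)
  next
    fix s assume s: "t0 < s" "s < t"
    have Is: "I s \<le> e" "I s \<ge> 0" "R s \<ge> 0" using Ie[of s] inD[of s] s t0 by auto
    have "delta * I s \<le> delta * e" using Is pars by (simp add: mult_left_mono)
    hence "(k - (b + alpha - delta * I s)) * R s \<le> 0" using ke Is by (simp add: mult_nonpos_nonneg)
    moreover have "nu * (I s - e) \<le> 0" using Is pars by (simp add: mult_nonneg_nonpos)
    ultimately have "nu * I s - (b + alpha - delta * I s) * R s + (R s - A) * k \<le> 0"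
      unfolding A_def using k by (simp add: algebra_simps)
    hence "(nu * I s - (b + alpha - delta * I s) * R s + (R s - A) * k) * exp (k * s) \<le> 0"
      by (simp add: mult_nonpos_nonneg)
    thus "(nu * I s - (b + alpha - delta * I s) * R s) * exp (k * s) + (R s - A) * (exp (k * s) * k) \<le> 0"
      by (simp add: algebra_simps)
  qed
  hence le: "(R t - A) * exp (k * t) \<le> (R t0 - A) * exp (k * t0)" unfolding v_def by simp
  have ee: "exp (k * t0) = exp (k * t) * exp (- k * (t - t0))" by (simp add: exp_add[symmetric] algebra_simps)
  have "(R t - A) * exp (k * t) \<le> ((R t0 - A) * exp (- k * (t - t0))) * exp (k * t)"
    using le unfolding ee by (simp add: algebra_simps)
  hence "R t - A \<le> (R t0 - A) * exp (- k * (t - t0))" by simp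
  also have "\<dots> \<le> R t0 * exp (- k * (t - t0))" using A0 by (simp add: algebra_simps)
  finally show ?thesis unfolding A_def by simp
qed


lemma g_bound:
  assumes le: "beta \<le> (1 - p) * b + nu + delta"
  obtains c where "c > 0" "\<And>t. t \<ge> 0 \<Longrightarrow> beta * S t - ((1 - p) * b + nu + delta) + delta * I t \<le> - c * I t"
proof -
  obtain c where "c > 0" and c: "\<forall>S I R. S \<ge> 0 \<and> I \<ge> 0 \<and> R \<ge> 0 \<and> S + I + R = 1 \<longrightarrow>
     beta * S - ((1 - p) * b + nu + delta) + delta * I \<le> - c * I"
    using c_exists[OF pars(1,3,4,6,7,2) le] by blast
  show ?thesis
  proof (rule that[OF \<open>c > 0\<close>])
    fix t :: real assume "t \<ge> 0"
    thus "beta * S t - ((1 - p) * b + nu + delta) + delta * I t \<le> - c * I t"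
      using c[rule_format, of "S t" "I t" "R t"] inD[of t] by simp
  qed
qed

lemma I_decr:
  assumes le: "beta \<le> (1 - p) * b + nu + delta" and st: "0 \<le> s" "s \<le> t"
  shows "I t \<le> I s"
proof -
  obtain c where c: "c > 0" "\<And>t. t \<ge> 0 \<Longrightarrow> beta * S t - ((1 - p) * b + nu + delta) + delta * I t \<le> - c * I t"
    using g_bound[OF le] by blast
  show ?thesis
  proof (rule decr_lemma[OF st cI dI])
    fix u assume u: "s < u" "u < t"
    hence "beta * S u - ((1 - p) * b + nu + delta) + delta * I u \<le> 0"
    proof -
      have "- c * I u \<le> 0" using c(1) inD(2)[of u] u st by simp
      thus ?thesis using c(2)[of u] u st by linarith
    qed
    thus "(beta * S u - ((1 - p) * b + nu + delta) + delta * I u) * I u \<le> 0"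
      using inD(2)[of u] u st by (simp add: mult_nonpos_nonneg)
  qed simp
qed

lemma I_lim:
  assumes le: "beta \<le> (1 - p) * b + nu + delta" and e: "e > 0"
  shows "\<exists>T\<ge>0. \<forall>t\<ge>T. I t < e"
proof -
  obtain c where c: "c > 0" "\<And>t. t \<ge> 0 \<Longrightarrow> beta * S t - ((1 - p) * b + nu + delta) + delta * I t \<le> - c * I t"
    using g_bound[OF le] by blast
  define T where "T = 2 / (c * e^2)"
  have T0: "T \<ge> 0" unfolding T_def using c e by simp
  have "I T < e"
  proof (rule ccontr)
    assume "\<not> I T < e"
    hence IT: "I T \<ge> e" by simp
    have Ige: "\<And>s. 0 \<le> s \<Longrightarrow> s \<le> T \<Longrightarrow> I s \<ge> e" using I_decr[OF le] IT by (meson order_trans)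
    define w where "w = (\<lambda>s. I s + c * e^2 * s)"
    have "w T \<le> w 0"
    proof (rule decr_lemma[OF _ T0, where f'="\<lambda>s. (beta * S s - ((1 - p) * b + nu + delta) + delta * I s) * I s + c * e^2"])
      show "continuous_on {0..} w" unfolding w_def by (intro continuous_intros cI)
      fix s :: real assume "0 < s"
      thus "(w has_real_derivative (beta * S s - ((1 - p) * b + nu + delta) + delta * I s) * I s + c * e^2) (at s)"
        unfolding w_def by (auto intro!: derivative_eq_intros dI)
    next
      fix s assume s: "0 < s" "s < T"
      have Is: "I s \<ge> e" using Ige s by auto
      have "(beta * S s - ((1 - p) * b + nu + delta) + delta * I s) * I s \<le> (- c * I s) * I s"
        using c(2)[of s] s Is e by (intro mult_right_mono) auto
      moreover have "e^2 \<le> I s * I s" using Is e by (metis power2_eq_square less_le_trans less_imp_le mult_mono)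
      hence "c * e^2 \<le> c * (I s * I s)" using c by simp
      ultimately show "(beta * S s - ((1 - p) * b + nu + delta) + delta * I s) * I s + c * e^2 \<le> 0"
        by (simp add: algebra_simps)
    qed simp
    moreover have "c * e^2 * T = 2" unfolding T_def using c e by simp
    moreover have "I 0 \<le> 1" using inD[of 0] by simp
    ultimately have "I T \<le> -1" unfolding w_def by simp
    thus False using inD(2)[OF T0] by simp
  qed
  thus ?thesis using I_decr[OF le T0] T0 by (meson le_less_trans)
qed

end


lemma gas:
  fixes b beta nu delta alpha p :: real
  assumes pars: "b > 0" "beta > 0" "nu > 0" "delta > 0" "alpha > 0" "0 < p" "p < 1"
  and le: "beta \<le> (1 - p) * b + nu + delta"
  shows "GAS_in (sirs_field b beta nu delta alpha p) D_fra (1, 0, 0)"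
proof -
  define k where "k = (b + alpha) / 2"
  have k0: "k > 0" unfolding k_def using pars by simp
  have stab: "lyapunov_stable_in (sirs_field b beta nu delta alpha p) D_fra (1, 0, 0)"
    unfolding lyapunov_stable_in_def
  proof (intro allI impI)
    fix eps :: real assume eps: "eps > 0"
    define eta where "eta = min (eps / (4 * (2 + nu / k))) ((b + alpha) / (2 * delta))"
    have q0: "2 + nu / k > 0" using k0 pars by (simp add: add_pos_nonneg)
    have eta0: "eta > 0" unfolding eta_def using eps q0 pars by simp
    have "\<forall>x. is_solution (sirs_field b beta nu delta alpha p) x \<and> x 0 \<in> D_fra \<and> dist (x 0) (1, 0, 0) < eta \<longrightarrow>
        (\<forall>t\<ge>0. dist (x t) (1, 0, 0) < eps)"
    proof (intro allI impI)
      fix x :: "real \<Rightarrow> real \<times> real \<times> real" and t :: real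
      assume h: "is_solution (sirs_field b beta nu delta alpha p) x \<and> x 0 \<in> D_fra \<and> dist (x 0) (1, 0, 0) < eta"
        and t: "t \<ge> 0"
      interpret sirs_sol b beta nu delta alpha p x "\<lambda>t. fst (x t)" "\<lambda>t. fst (snd (x t))" "\<lambda>t. snd (snd (x t))"
        using pars h by unfold_locales auto
      have "dist (fst (snd (x 0))) 0 \<le> dist (x 0) (1, 0, 0)"
        using dist_fst_le[of "snd (x 0)" "(0,0)"] dist_snd_le[of "x 0" "(1,0,0)"] by simp
      hence I0: "fst (snd (x 0)) < eta" using h by (simp add: dist_real_def) linarith
      have "dist (snd (snd (x 0))) 0 \<le> dist (x 0) (1, 0, 0)"
        using dist_snd_le[of "snd (x 0)" "(0,0)"] dist_snd_le[of "x 0" "(1,0,0)"] by simp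
      hence R0: "snd (snd (x 0)) < eta" using h by (simp add: dist_real_def) linarith
      have It: "fst (snd (x t)) \<le> fst (snd (x 0))" using I_decr[OF le _ t] by simp
      have "delta * fst (snd (x 0)) \<le> delta * eta" using I0 pars by simp
      also have "\<dots> \<le> delta * ((b + alpha) / (2 * delta))" unfolding eta_def using pars
        by (intro mult_left_mono) auto
      also have "\<dots> = k" unfolding k_def using pars by simp
      finally have ke: "b + alpha - delta * fst (snd (x 0)) \<ge> k" unfolding k_def by simp
      have Rt: "snd (snd (x t)) \<le> nu * fst (snd (x 0)) / k + snd (snd (x 0)) * exp (- k * (t - 0))"
        by (rule R_bound[OF _ k0 _ ke t]) (use I_decr[OF le] in auto)
      have "exp (- k * (t - 0)) \<le> 1" using k0 t by simp
      hence "snd (snd (x 0)) * exp (- k * (t - 0)) \<le> eta"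
        using R0 inD(3)[of 0] mult_left_le[of "exp (- k * (t - 0))" "snd (snd (x 0))"] by simp
      moreover have "nu * fst (snd (x 0)) / k \<le> nu * eta / k" using I0 pars k0
        by (simp add: divide_right_mono)
      ultimately have Rb: "snd (snd (x t)) \<le> nu * eta / k + eta" using Rt by linarith
      have D: "fst (x t) = 1 - fst (snd (x t)) - snd (snd (x t))" "fst (snd (x t)) \<ge> 0" "snd (snd (x t)) \<ge> 0"
        using inD[OF t] by auto
      have "dist (x t) (1, 0, 0) \<le> \<bar>fst (x t) - 1\<bar> + \<bar>fst (snd (x t)) - 0\<bar> + \<bar>snd (snd (x t)) - 0\<bar>"
        using dist3[of "fst (x t)" "fst (snd (x t))" "snd (snd (x t))" 1 0 0] by simp
      also have "\<dots> = 2 * (fst (snd (x t)) + snd (snd (x t)))" using D by simp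
      also have "\<dots> \<le> 2 * (eta + (nu * eta / k + eta))" using It I0 Rb by simp
      also have "\<dots> = 2 * eta * (2 + nu / k)" by (simp add: algebra_simps)
      also have "\<dots> \<le> 2 * (eps / (4 * (2 + nu / k))) * (2 + nu / k)" unfolding eta_def using q0 eps
        by (intro mult_right_mono mult_left_mono) auto
      also have "\<dots> = eps / 2" using q0 by (simp add: divide_simps)
      finally show "dist (x t) (1, 0, 0) < eps" using eps by simp
    qed
    thus "\<exists>eta>0. \<forall>x. is_solution (sirs_field b beta nu delta alpha p) x \<and> x 0 \<in> D_fra \<and> dist (x 0) (1, 0, 0) < eta \<longrightarrow>
        (\<forall>t\<ge>0. dist (x t) (1, 0, 0) < eps)" using eta0 by blast
  qed
  have attr: "attracting_in (sirs_field b beta nu delta alpha p) D_fra (1, 0, 0)"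
    unfolding attracting_in_def
  proof (intro allI impI)
    fix x :: "real \<Rightarrow> real \<times> real \<times> real"
    assume h: "is_solution (sirs_field b beta nu delta alpha p) x \<and> x 0 \<in> D_fra"
    interpret sirs_sol b beta nu delta alpha p x "\<lambda>t. fst (x t)" "\<lambda>t. fst (snd (x t))" "\<lambda>t. snd (snd (x t))"
      using pars h by unfold_locales auto
    have Ilim: "((\<lambda>t. fst (snd (x t))) \<longlongrightarrow> 0) at_top"
      unfolding tendsto_iff
    proof (intro allI impI)
      fix e :: real assume "e > 0"
      then obtain T where T: "T \<ge> 0" "\<And>t. t \<ge> T \<Longrightarrow> fst (snd (x t)) < e" using I_lim[OF le] by blast
      show "\<forall>\<^sub>F t in at_top. dist (fst (snd (x t))) 0 < e" unfolding eventually_at_top_linorder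
        using T inD(2) by (intro exI[of _ T]) (auto simp: dist_real_def)
    qed
    have Rlim: "((\<lambda>t. snd (snd (x t))) \<longlongrightarrow> 0) at_top"
      unfolding tendsto_iff
    proof (intro allI impI)
      fix eps :: real assume eps: "eps > 0"
      define e where "e = min ((b + alpha) / (2 * delta)) (eps * k / (2 * nu))"
      have e0: "e > 0" unfolding e_def using eps k0 pars by simp
      then obtain T1 where T1: "T1 \<ge> 0" "\<And>t. t \<ge> T1 \<Longrightarrow> fst (snd (x t)) < e" using I_lim[OF le] by blast
      have "delta * e \<le> delta * ((b + alpha) / (2 * delta))" unfolding e_def using pars
        by (intro mult_left_mono) auto
      also have "\<dots> = k" unfolding k_def using pars by simp
      finally have ke: "b + alpha - delta * e \<ge> k" unfolding k_def by simp
      have nue: "nu * e / k \<le> eps / 2"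
      proof -
        have "nu * e \<le> nu * (eps * k / (2 * nu))" unfolding e_def using pars by (intro mult_left_mono) auto
        also have "\<dots> = eps * k / 2" using pars by simp
        finally show ?thesis using k0 by (simp add: field_simps)
      qed
      define T2 where "T2 = T1 + \<bar>ln (eps / 2)\<bar> / k + 1"
      have "\<forall>t\<ge>T2. dist (snd (snd (x t))) 0 < eps"
      proof (intro allI impI)
        fix t assume t: "t \<ge> T2"
        have "\<bar>ln (eps / 2)\<bar> / k \<ge> 0" using k0 by simp
        hence tT1: "t \<ge> T1" using t unfolding T2_def by linarith
        have Rt: "snd (snd (x t)) \<le> nu * e / k + snd (snd (x T1)) * exp (- k * (t - T1))"
          by (rule R_bound[OF T1(1) k0 _ ke tT1]) (use T1 in \<open>auto intro: less_imp_le\<close>)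
        have "k * (t - T1) \<ge> k * (\<bar>ln (eps / 2)\<bar> / k + 1)" using t k0 unfolding T2_def by simp
        hence "k * (t - T1) \<ge> \<bar>ln (eps / 2)\<bar> + k" using k0 by (simp add: algebra_simps)
        hence "- k * (t - T1) < ln (eps / 2)" using k0 by simp
        hence "exp (- k * (t - T1)) < exp (ln (eps / 2))" by simp
        hence ex: "exp (- k * (t - T1)) < eps / 2" using eps by simp
        have "snd (snd (x T1)) * exp (- k * (t - T1)) \<le> exp (- k * (t - T1))"
          using inD[OF T1(1)] by (intro mult_left_le_one_le) auto
        hence "snd (snd (x t)) < eps" using Rt ex nue by linarith
        thus "dist (snd (snd (x t))) 0 < eps" using inD(3)[of t] tT1 T1 by (simp add: dist_real_def)
      qed
      thus "\<forall>\<^sub>F t in at_top. dist (snd (snd (x t))) 0 < eps" unfolding eventually_at_top_linorder by blast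
    qed
    have lim: "((\<lambda>t. (1 - fst (snd (x t)) - snd (snd (x t)), fst (snd (x t)), snd (snd (x t)))) \<longlongrightarrow> (1 - 0 - 0, 0, 0)) at_top"
      by (intro tendsto_intros Ilim Rlim)
    have ev: "\<forall>\<^sub>F t in at_top. (1 - fst (snd (x t)) - snd (snd (x t)), fst (snd (x t)), snd (snd (x t))) = x t"
      unfolding eventually_at_top_linorder using inD(4)
      by (intro exI[of _ 0] allI impI) (auto simp: prod_eq_iff algebra_simps)
    show "(x \<longlongrightarrow> (1, 0, 0)) at_top" using tendsto_cong[OF ev] lim by simp
  qed
  show ?thesis unfolding GAS_in_def using stab attr by simp
qed


lemma unstable:
  fixes b beta nu delta alpha p :: real
  assumes pars: "b > 0" "beta > 0" "nu > 0" "delta > 0" "alpha > 0" "0 < p" "p < 1"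
  and gt: "beta > (1 - p) * b + nu + delta"
  and ex: "\<And>x0. x0 \<in> D_fra \<Longrightarrow> \<exists>x. is_solution (sirs_field b beta nu delta alpha p) x \<and> x 0 = x0"
  shows "\<not> lyapunov_stable_in (sirs_field b beta nu delta alpha p) D_fra (1, 0, 0)"
proof
  define gam where "gam = (1 - p) * b + nu + delta"
  define c where "c = (beta - gam) / 2"
  have c0: "c > 0" unfolding c_def gam_def using gt by simp
  define eps where "eps = min ((beta - gam) / (4 * beta)) (1 / 2)"
  have eps0: "eps > 0" unfolding eps_def gam_def using gt pars by simp
  assume "lyapunov_stable_in (sirs_field b beta nu delta alpha p) D_fra (1, 0, 0)"
  then obtain eta where eta: "eta > 0" and st: "\<And>x. is_solution (sirs_field b beta nu delta alpha p) x \<and> x 0 \<in> D_fra \<and> dist (x 0) (1, 0, 0) < eta \<Longrightarrow>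
        (\<forall>t\<ge>0. dist (x t) (1, 0, 0) < eps)"
    unfolding lyapunov_stable_in_def using eps0 by blast
  define h where "h = min (eta / 3) (1 / 2)"
  have h0: "h > 0" "h \<le> 1/2" "2 * h < eta" unfolding h_def using eta by auto
  have x0D: "(1 - h, h, 0) \<in> D_fra" unfolding D_fra_def using h0 by auto
  obtain x where sx: "is_solution (sirs_field b beta nu delta alpha p) x" and x00: "x 0 = (1 - h, h, 0)"
    using ex[OF x0D] by blast
  have "dist (x 0) (1, 0, 0) \<le> \<bar>(1 - h) - 1\<bar> + \<bar>h - 0\<bar> + \<bar>0 - 0\<bar>" unfolding x00 by (rule dist3)
  hence "dist (x 0) (1, 0, 0) < eta" using h0 by simp
  hence small: "\<And>t. t \<ge> 0 \<Longrightarrow> dist (x t) (1, 0, 0) < eps" using st sx x0D x00 by auto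
  interpret sirs_sol b beta nu delta alpha p x "\<lambda>t. fst (x t)" "\<lambda>t. fst (snd (x t))" "\<lambda>t. snd (snd (x t))"
    using pars sx x0D x00 by unfold_locales auto
  have IR: "fst (snd (x t)) < eps \<and> snd (snd (x t)) < eps" if t: "t \<ge> 0" for t
  proof -
    have "dist (fst (snd (x t))) 0 \<le> dist (x t) (1, 0, 0)"
      using dist_fst_le[of "snd (x t)" "(0,0)"] dist_snd_le[of "x t" "(1,0,0)"] by simp
    moreover have "dist (snd (snd (x t))) 0 \<le> dist (x t) (1, 0, 0)"
      using dist_snd_le[of "snd (x t)" "(0,0)"] dist_snd_le[of "x t" "(1,0,0)"] by simp
    ultimately show ?thesis using small[OF t] by (auto simp: dist_real_def)
  qed
  have gc: "beta * fst (x t) - gam + delta * fst (snd (x t)) \<ge> c" if t: "t \<ge> 0" for t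
  proof -
    have e: "fst (x t) = 1 - fst (snd (x t)) - snd (snd (x t))" using inD(4)[OF t] by simp
    have "beta * (fst (snd (x t)) + snd (snd (x t))) \<le> beta * (2 * eps)" using IR[OF t] pars by simp
    also have "\<dots> \<le> beta * (2 * ((beta - gam) / (4 * beta)))" using pars unfolding eps_def
      by (intro mult_left_mono) auto
    also have "\<dots> = (beta - gam) / 2" using pars by simp
    finally have "beta * (fst (snd (x t)) + snd (snd (x t))) \<le> (beta - gam) / 2" .
    hence X: "beta * fst (snd (x t)) + beta * snd (snd (x t)) \<le> (beta - gam) / 2" by (simp add: distrib_left)
    have Y: "beta * fst (x t) - gam + delta * fst (snd (x t)) = beta - gam - (beta * fst (snd (x t)) + beta * snd (snd (x t))) + delta * fst (snd (x t))"
      unfolding e by (simp add: algebra_simps)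
    have "delta * fst (snd (x t)) \<ge> 0" using inD(2)[OF t] pars by simp
    thus ?thesis unfolding Y c_def using X by (simp add: field_simps)
  qed
  define T where "T = 1 / (h * c)"
  have T0: "T \<ge> 0" unfolding T_def using h0 c0 by simp
  have "- (fst (snd (x T)) * exp (- c * T)) \<le> - (fst (snd (x 0)) * exp (- c * 0))"
  proof (rule decr_lemma[OF _ T0, where f'="\<lambda>s. - ((beta * fst (x s) - ((1 - p) * b + nu + delta) + delta * fst (snd (x s))) * fst (snd (x s)) * exp (- c * s)
      + fst (snd (x s)) * (exp (- c * s) * (- c)))"])
    show "continuous_on {0..} (\<lambda>s. - (fst (snd (x s)) * exp (- c * s)))" by (intro continuous_intros cI)
    fix s :: real assume "0 < s"
    thus "((\<lambda>s. - (fst (snd (x s)) * exp (- c * s))) has_real_derivative - ((beta * fst (x s) - ((1 - p) * b + nu + delta) + delta * fst (snd (x s))) * fst (snd (x s)) * exp (- c * s)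
      + fst (snd (x s)) * (exp (- c * s) * (- c)))) (at s)"
      by (auto intro!: derivative_eq_intros dI)
  next
    fix s assume s: "0 < s" "s < T"
    have "(beta * fst (x s) - gam + delta * fst (snd (x s)) - c) * fst (snd (x s)) * exp (- c * s) \<ge> 0"
      using gc[of s] s inD(2)[of s] by (intro mult_nonneg_nonneg) auto
    thus "- ((beta * fst (x s) - ((1 - p) * b + nu + delta) + delta * fst (snd (x s))) * fst (snd (x s)) * exp (- c * s)
      + fst (snd (x s)) * (exp (- c * s) * (- c))) \<le> 0" unfolding gam_def by (simp add: algebra_simps)
  qed simp
  hence "fst (snd (x T)) * exp (- c * T) \<ge> h" using x00 by simp
  hence "fst (snd (x T)) * exp (- c * T) * exp (c * T) \<ge> h * exp (c * T)" by simp
  hence IT: "fst (snd (x T)) \<ge> h * exp (c * T)" by (simp add: mult.assoc exp_add[symmetric])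
  have "h * exp (c * T) \<ge> h * (1 + c * T)" using h0 by (intro mult_left_mono) (auto simp: exp_ge_add_one_self)
  also have "h * (1 + c * T) = h + 1" unfolding T_def using h0 c0 by (simp add: field_simps)
  finally have "fst (snd (x T)) > 1 / 2" using IT h0 by simp
  moreover have "eps \<le> 1 / 2" unfolding eps_def by simp
  ultimately show False using IR[OF T0] by simp
qed



fun picard :: "('a::banach \<Rightarrow> 'a) \<Rightarrow> 'a \<Rightarrow> nat \<Rightarrow> real \<Rightarrow> 'a" where
  "picard G x0 0 = (\<lambda>t. x0)"
| "picard G x0 (Suc n) = (\<lambda>t. x0 + integral {0..t} (\<lambda>s. G (picard G x0 n s)))"

lemma power_integral:
  fixes C :: real and t :: real and m :: nat
  assumes "t \<ge> 0"
  shows "integral {0..t} (\<lambda>s. C * s ^ m) = C * t ^ Suc m / Suc m"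
proof -
  have "((\<lambda>s. C * s ^ m) has_integral ((\<lambda>s. C * s ^ Suc m / Suc m) t - (\<lambda>s. C * s ^ Suc m / Suc m) 0)) {0..t}"
  proof (rule fundamental_theorem_of_calculus[OF assms])
    fix s assume "s \<in> {0..t}"
    have "((\<lambda>s. C * s ^ Suc m / Suc m) has_real_derivative C * (real (Suc m) * s ^ (Suc m - Suc 0)) / Suc m) (at s within {0..t})"
      by (intro DERIV_cdivide DERIV_cmult DERIV_pow)
    moreover have "C * (real (Suc m) * s ^ (Suc m - Suc 0)) / Suc m = C * s ^ m" by simp
    ultimately have "((\<lambda>s. C * s ^ Suc m / Suc m) has_real_derivative C * s ^ m) (at s within {0..t})" by simp
    thus "((\<lambda>s. C * s ^ Suc m / Suc m) has_vector_derivative C * s ^ m) (at s within {0..t})"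
      by (simp add: has_real_derivative_iff_has_vector_derivative)
  qed
  from integral_unique[OF this] show ?thesis by simp
qed

lemma picard_exists:
  fixes G :: "'a::banach \<Rightarrow> 'a"
  assumes L: "\<And>x y. norm (G x - G y) \<le> L * norm (x - y)" and L0: "L > 0" and M: "\<And>x. norm (G x) \<le> M"
  shows "\<exists>\<psi>. \<psi> 0 = x0 \<and> (\<forall>t\<ge>0. (\<psi> has_vector_derivative G (\<psi> t)) (at t within {0..}))"
proof -
  define \<phi> where "\<phi> = picard G x0"
  have M0: "M \<ge> 0" using M[of x0] norm_ge_zero order_trans by blast
  have cG: "continuous_on UNIV G"
    by (rule lipschitz_on_continuous_on[of L]) (use L L0 in \<open>auto simp: lipschitz_on_def dist_norm\<close>)
  have ph0: "\<And>t. \<phi> 0 t = x0" and phS: "\<And>n t. \<phi> (Suc n) t = x0 + integral {0..t} (\<lambda>s. G (\<phi> n s))"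
    unfolding \<phi>_def by simp_all
  have lip: "M-lipschitz_on {0..} (\<phi> n)" for n
  proof (induction n)
    case 0
    then show ?case using M0 by (auto simp: lipschitz_on_def ph0)
  next
    case (Suc n)
    have cn: "continuous_on {0..} (\<lambda>s. G (\<phi> n s))"
      by (rule continuous_on_compose2[OF cG lipschitz_on_continuous_on[OF Suc.IH]]) auto
    have key: "dist (\<phi> (Suc n) t) (\<phi> (Suc n) s) \<le> M * dist t s" if st: "0 \<le> s" "s \<le> t" for s t
    proof -
      have int: "(\<lambda>s. G (\<phi> n s)) integrable_on {0..t}"
        by (rule integrable_continuous_interval, rule continuous_on_subset[OF cn]) (use st in auto)
      have "\<phi> (Suc n) t - \<phi> (Suc n) s = integral {s..t} (\<lambda>s. G (\<phi> n s))"
        unfolding phS using Henstock_Kurzweil_Integration.integral_combine[OF st int] by (simp add: algebra_simps)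
      also have "norm \<dots> \<le> M * (t - s)"
        by (rule integral_bound[OF st(2)]) (use cn st M in \<open>auto intro: continuous_on_subset\<close>)
      finally show ?thesis using st by (simp add: dist_norm dist_real_def)
    qed
    show ?case unfolding lipschitz_on_def
    proof (intro conjI ballI)
      fix s t :: real assume "s \<in> {0..}" "t \<in> {0..}"
      thus "dist (\<phi> (Suc n) s) (\<phi> (Suc n) t) \<le> M * dist s t"
        using key[of s t] key[of t s] by (cases "s \<le> t") (auto simp: dist_commute)
    qed (rule M0)
  qed
  have cph: "continuous_on {0..} (\<phi> n)" for n using lipschitz_on_continuous_on[OF lip] .
  have cGph: "continuous_on {0..} (\<lambda>s. G (\<phi> n s))" for n
    by (rule continuous_on_compose2[OF cG cph]) auto
  have intG: "(\<lambda>s. G (\<phi> n s)) integrable_on {0..t}" if "t \<ge> 0" for n t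
    by (rule integrable_continuous_interval, rule continuous_on_subset[OF cGph]) auto
  define \<beta> where "\<beta> = (\<lambda>k t. M * L ^ k * t ^ Suc k / fact (Suc k))"
  have diff: "norm (\<phi> (Suc n) t - \<phi> n t) \<le> \<beta> n t" if "t \<ge> 0" for n t
    using that
  proof (induction n arbitrary: t)
    case 0
    have "norm (integral {0..t} (\<lambda>s. G x0)) \<le> M * (t - 0)"
      by (rule integral_bound) (use 0 M in auto)
    thus ?case unfolding \<beta>_def by (simp add: phS ph0)
  next
    case (Suc n)
    have "\<phi> (Suc (Suc n)) t - \<phi> (Suc n) t = integral {0..t} (\<lambda>s. G (\<phi> (Suc n) s) - G (\<phi> n s))"
      unfolding phS[of "Suc n" t] phS[of n t] using integral_diff[OF intG intG, OF Suc.prems Suc.prems] by simp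
    also have "norm \<dots> \<le> integral {0..t} (\<lambda>s. (L * M * L ^ n / fact (Suc n)) * s ^ Suc n)"
    proof (rule integral_norm_bound_integral)
      show "(\<lambda>s. G (\<phi> (Suc n) s) - G (\<phi> n s)) integrable_on {0..t}"
        using integrable_diff[OF intG intG, OF Suc.prems Suc.prems] .
      show "(\<lambda>s. (L * M * L ^ n / fact (Suc n)) * s ^ Suc n) integrable_on {0..t}"
        by (intro integrable_continuous_interval continuous_intros)
      fix s assume s: "s \<in> {0..t}"
      have "norm (G (\<phi> (Suc n) s) - G (\<phi> n s)) \<le> L * norm (\<phi> (Suc n) s - \<phi> n s)" by (rule L)
      also have "\<dots> \<le> L * \<beta> n s" using Suc.IH[of s] s L0 by (intro mult_left_mono) auto
      also have "\<dots> = (L * M * L ^ n / fact (Suc n)) * s ^ Suc n" unfolding \<beta>_def by simp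
      finally show "norm (G (\<phi> (Suc n) s) - G (\<phi> n s)) \<le> (L * M * L ^ n / fact (Suc n)) * s ^ Suc n" .
    qed
    also have "\<dots> = (L * M * L ^ n / fact (Suc n)) * t ^ Suc (Suc n) / Suc (Suc n)"
      by (rule power_integral[OF Suc.prems])
    also have "\<dots> = \<beta> (Suc n) t" unfolding \<beta>_def by (simp add: field_simps)
    finally show ?case .
  qed
  have sumb: "summable (\<lambda>k. \<beta> k t)" if "t \<ge> 0" for t
  proof -
    have "summable (\<lambda>k. inverse (fact (Suc k)) * (L * t) ^ Suc k)"
      using summable_exp[of "L * t"] by (subst summable_Suc_iff)
    hence "summable (\<lambda>k. (M / L) * (inverse (fact (Suc k)) * (L * t) ^ Suc k))" by (rule summable_mult)
    moreover have "(M / L) * (inverse (fact (Suc k)) * (L * t) ^ Suc k) = \<beta> k t" for k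
      unfolding \<beta>_def using L0 by (simp add: power_mult_distrib field_simps)
    ultimately show ?thesis by simp
  qed
  have bmono: "\<beta> k s \<le> \<beta> k t" if "0 \<le> s" "s \<le> t" for k s t
    unfolding \<beta>_def using that M0 L0 by (intro divide_right_mono mult_left_mono power_mono) auto
  define d where "d = (\<lambda>k t. \<phi> (Suc k) t - \<phi> k t)"
  have sumd: "summable (\<lambda>k. d k t)" if "t \<ge> 0" for t
    by (rule summable_comparison_test[OF _ sumb[OF that]]) (use diff that in \<open>auto simp: d_def\<close>)
  define \<psi> where "\<psi> = (\<lambda>t. x0 + (\<Sum>k. d k t))"
  define \<rho> where "\<rho> = (\<lambda>n t. \<Sum>k. \<beta> (k + n) t)"
  have err: "norm (\<psi> t - \<phi> n t) \<le> \<rho> n t" if t: "t \<ge> 0" for n t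
  proof -
    have tel: "\<phi> n t = x0 + (\<Sum>k<n. d k t)" unfolding d_def
      using sum_lessThan_telescope[of "\<lambda>k. \<phi> k t" n] by (simp add: ph0)
    have "\<psi> t - \<phi> n t = (\<Sum>k. d (k + n) t)"
      unfolding \<psi>_def tel using suminf_split_initial_segment[OF sumd[OF t], of n] by simp
    also have "norm \<dots> \<le> (\<Sum>k. norm (d (k + n) t))"
    proof (rule summable_norm)
      show "summable (\<lambda>k. norm (d (k + n) t))"
        by (rule summable_comparison_test[OF _ summable_ignore_initial_segment[OF sumb[OF t]]])
           (use diff t in \<open>auto simp: d_def\<close>)
    qed
    also have "\<dots> \<le> \<rho> n t" unfolding \<rho>_def
    proof (rule suminf_le)
      show "summable (\<lambda>k. norm (d (k + n) t))"
        by (rule summable_comparison_test[OF _ summable_ignore_initial_segment[OF sumb[OF t]]])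
           (use diff t in \<open>auto simp: d_def\<close>)
      show "summable (\<lambda>k. \<beta> (k + n) t)" by (rule summable_ignore_initial_segment[OF sumb[OF t]])
    qed (use diff t in \<open>auto simp: d_def\<close>)
    finally show ?thesis .
  qed
  have rho0: "(\<lambda>n. \<rho> n t) \<longlonglongrightarrow> 0" if t: "t \<ge> 0" for t
  proof -
    have "(\<lambda>n. (\<Sum>k. \<beta> k t) - (\<Sum>k<n. \<beta> k t)) \<longlonglongrightarrow> (\<Sum>k. \<beta> k t) - (\<Sum>k. \<beta> k t)"
      by (intro tendsto_intros summable_LIMSEQ sumb t)
    moreover have "\<rho> n t = (\<Sum>k. \<beta> k t) - (\<Sum>k<n. \<beta> k t)" for n
      unfolding \<rho>_def using suminf_split_initial_segment[OF sumb[OF t], of n] by simp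
    ultimately show ?thesis by simp
  qed
  have rhomono: "\<rho> n s \<le> \<rho> n t" if "0 \<le> s" "s \<le> t" for n s t
    unfolding \<rho>_def using that
    by (intro suminf_le bmono summable_ignore_initial_segment[OF sumb]) auto
  have conv: "(\<lambda>n. \<phi> n t) \<longlonglongrightarrow> \<psi> t" if t: "t \<ge> 0" for t
  proof -
    have "(\<lambda>n. \<phi> n t - \<psi> t) \<longlonglongrightarrow> 0"
      by (rule Lim_null_comparison[OF _ rho0[OF t]]) (use err[OF t] in \<open>auto simp: norm_minus_commute\<close>)
    thus ?thesis by (simp add: LIM_zero_iff)
  qed
  have lipps: "M-lipschitz_on {0..} \<psi>" unfolding lipschitz_on_def
  proof (intro conjI ballI)
    fix s t :: real assume st: "s \<in> {0..}" "t \<in> {0..}"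
    have "(\<lambda>n. dist (\<phi> n s) (\<phi> n t)) \<longlonglongrightarrow> dist (\<psi> s) (\<psi> t)"
      using st by (intro tendsto_intros conv) auto
    thus "dist (\<psi> s) (\<psi> t) \<le> M * dist s t"
      by (rule tendsto_upperbound) (use lip st in \<open>auto simp: lipschitz_on_def\<close>)
  qed (rule M0)
  have cps: "continuous_on {0..} \<psi>" using lipschitz_on_continuous_on[OF lipps] .
  have cGps: "continuous_on {0..} (\<lambda>s. G (\<psi> s))" by (rule continuous_on_compose2[OF cG cps]) auto
  have inteq: "\<psi> t = x0 + integral {0..t} (\<lambda>s. G (\<psi> s))" if t: "t \<ge> 0" for t
  proof -
    have A: "(\<lambda>n. \<phi> (Suc n) t) \<longlonglongrightarrow> \<psi> t" using LIMSEQ_Suc[OF conv[OF t]] .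
    have "(\<lambda>n. \<phi> (Suc n) t - (x0 + integral {0..t} (\<lambda>s. G (\<psi> s)))) \<longlonglongrightarrow> 0"
    proof (rule Lim_null_comparison)
      show "(\<lambda>n. L * \<rho> n t * (t - 0)) \<longlonglongrightarrow> 0" using rho0[OF t] by (intro tendsto_eq_intros) auto
      show "\<forall>\<^sub>F n in sequentially. norm (\<phi> (Suc n) t - (x0 + integral {0..t} (\<lambda>s. G (\<psi> s)))) \<le> L * \<rho> n t * (t - 0)"
      proof (intro always_eventually allI)
        fix n
        have "\<phi> (Suc n) t - (x0 + integral {0..t} (\<lambda>s. G (\<psi> s))) = integral {0..t} (\<lambda>s. G (\<phi> n s) - G (\<psi> s))"
          unfolding phS by (subst integral_diff[OF intG[OF t]]) (auto intro!: integrable_continuous_interval continuous_on_subset[OF cGps])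
        also have "norm \<dots> \<le> L * \<rho> n t * (t - 0)"
        proof (rule integral_bound)
          show "continuous_on {0..t} (\<lambda>s. G (\<phi> n s) - G (\<psi> s))"
            by (intro continuous_intros continuous_on_subset[OF cGps] continuous_on_subset[OF cGph]) auto
          fix s assume s: "s \<in> {0..t}"
          have "norm (G (\<phi> n s) - G (\<psi> s)) \<le> L * norm (\<phi> n s - \<psi> s)" by (rule L)
          also have "\<dots> \<le> L * \<rho> n s" using err[of s n] s L0 by (intro mult_left_mono) (auto simp: norm_minus_commute)
          also have "\<dots> \<le> L * \<rho> n t" using rhomono[of s t n] s L0 by (intro mult_left_mono) auto
          finally show "norm (G (\<phi> n s) - G (\<psi> s)) \<le> L * \<rho> n t" .
        qed (use t in auto)
        finally show "norm (\<phi> (Suc n) t - (x0 + integral {0..t} (\<lambda>s. G (\<psi> s)))) \<le> L * \<rho> n t * (t - 0)" .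
      qed
    qed
    hence B: "(\<lambda>n. \<phi> (Suc n) t) \<longlonglongrightarrow> x0 + integral {0..t} (\<lambda>s. G (\<psi> s))" by (simp add: LIM_zero_iff)
    show ?thesis using LIMSEQ_unique[OF A B] .
  qed
  have der: "(\<psi> has_vector_derivative G (\<psi> t)) (at t within {0..})" if t: "t \<ge> 0" for t
  proof -
    have "((\<lambda>u. integral {0..u} (\<lambda>s. G (\<psi> s))) has_vector_derivative G (\<psi> t)) (at t within {0..t+1})"
      by (rule integral_has_vector_derivative) (use t in \<open>auto intro: continuous_on_subset[OF cGps]\<close>)
    hence "((\<lambda>u. x0 + integral {0..u} (\<lambda>s. G (\<psi> s))) has_vector_derivative 0 + G (\<psi> t)) (at t within {0..t+1})"
      by (intro has_vector_derivative_add has_vector_derivative_const)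
    hence "((\<lambda>u. x0 + integral {0..u} (\<lambda>s. G (\<psi> s))) has_vector_derivative G (\<psi> t)) (at t within {0..t+1})"
      by simp
    hence "(\<psi> has_vector_derivative G (\<psi> t)) (at t within {0..t+1})"
      by (rule has_vector_derivative_transform_within[where d=1]) (use t inteq in auto)
    moreover have "at t within {0..t+1} = at t within {0..}"
      by (rule at_within_nhd[where S="{..<t+1}"]) auto
    ultimately show ?thesis by simp
  qed
  have "\<psi> 0 = x0" using inteq[of 0] by simp
  thus ?thesis using der by blast
qed



definition cl :: "real \<Rightarrow> real" where "cl y = max (-1) (min 2 y)"

lemma cl_abs: "\<bar>cl y\<bar> \<le> 2" unfolding cl_def by auto
lemma cl_lip: "\<bar>cl y - cl y'\<bar> \<le> \<bar>y - y'\<bar>" unfolding cl_def max_def min_def abs_if by auto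
lemma cl_id: "-1 \<le> y \<Longrightarrow> y \<le> 2 \<Longrightarrow> cl y = y" unfolding cl_def by auto

definition Pc :: "real \<times> real \<times> real \<Rightarrow> real \<times> real \<times> real" where
  "Pc z = (cl (fst z), cl (fst (snd z)), cl (snd (snd z)))"

lemma prod_lip:
  fixes u v u' v' :: real
  assumes "\<bar>v\<bar> \<le> 2" "\<bar>u'\<bar> \<le> 2"
  shows "\<bar>u * v - u' * v'\<bar> \<le> 2 * \<bar>u - u'\<bar> + 2 * \<bar>v - v'\<bar>"
proof -
  have "u * v - u' * v' = (u - u') * v + u' * (v - v')" by (simp add: algebra_simps)
  hence "\<bar>u * v - u' * v'\<bar> \<le> \<bar>u - u'\<bar> * \<bar>v\<bar> + \<bar>u'\<bar> * \<bar>v - v'\<bar>"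
    using abs_triangle_ineq[of "(u - u') * v" "u' * (v - v')"] by (simp add: abs_mult)
  also have "\<dots> \<le> \<bar>u - u'\<bar> * 2 + 2 * \<bar>v - v'\<bar>"
    using assms by (intro add_mono mult_left_mono mult_right_mono) auto
  finally show ?thesis by simp
qed

lemma abs4:
  fixes c1 c2 c3 c4 x1 x2 x3 x4 X :: real
  assumes "\<bar>x1\<bar> \<le> X" "\<bar>x2\<bar> \<le> X" "\<bar>x3\<bar> \<le> X" "\<bar>x4\<bar> \<le> X"
  shows "\<bar>c1 * x1 + c2 * x2 + c3 * x3 + c4 * x4\<bar> \<le> (\<bar>c1\<bar> + \<bar>c2\<bar> + \<bar>c3\<bar> + \<bar>c4\<bar>) * X"
proof -
  have "\<bar>c1 * x1 + c2 * x2 + c3 * x3 + c4 * x4\<bar> \<le> \<bar>c1\<bar> * \<bar>x1\<bar> + \<bar>c2\<bar> * \<bar>x2\<bar> + \<bar>c3\<bar> * \<bar>x3\<bar> + \<bar>c4\<bar> * \<bar>x4\<bar>"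
    using abs_triangle_ineq[of "c1 * x1 + c2 * x2 + c3 * x3" "c4 * x4"] abs_triangle_ineq[of "c1 * x1 + c2 * x2" "c3 * x3"]
      abs_triangle_ineq[of "c1 * x1" "c2 * x2"] by (simp add: abs_mult)
  also have "\<dots> \<le> \<bar>c1\<bar> * X + \<bar>c2\<bar> * X + \<bar>c3\<bar> * X + \<bar>c4\<bar> * X"
    using assms by (intro add_mono mult_left_mono) auto
  finally show ?thesis by (simp add: algebra_simps)
qed

lemma norm3: "norm (a::real, b::real, c::real) \<le> \<bar>a\<bar> + \<bar>b\<bar> + \<bar>c\<bar>"
proof -
  have "norm (a, b, c) \<le> norm a + norm (b, c)" by (rule norm_Pair_le)
  also have "norm (b, c) \<le> norm b + norm c" by (rule norm_Pair_le)
  finally show ?thesis by simp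
qed

lemma F_lip:
  fixes s i r s' i' r' :: real
  assumes bd: "\<bar>s\<bar> \<le> 2" "\<bar>i\<bar> \<le> 2" "\<bar>r\<bar> \<le> 2" "\<bar>s'\<bar> \<le> 2" "\<bar>i'\<bar> \<le> 2" "\<bar>r'\<bar> \<le> 2"
  and dd: "\<bar>s - s'\<bar> \<le> e" "\<bar>i - i'\<bar> \<le> e" "\<bar>r - r'\<bar> \<le> e"
  shows "norm (sirs_field b beta nu delta alpha p (s, i, r) - sirs_field b beta nu delta alpha p (s', i', r'))
     \<le> 4 * ((\<bar>b\<bar> + \<bar>b * p\<bar> + \<bar>beta - delta\<bar> + \<bar>alpha\<bar>) + (\<bar>beta\<bar> + \<bar>(1 - p) * b + nu + delta\<bar> + \<bar>delta\<bar> + 0)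
          + (\<bar>nu\<bar> + \<bar>b + alpha\<bar> + \<bar>delta\<bar> + 0)) * e"
proof -
  have e0: "e \<ge> 0" using dd(1) by simp
  have m1: "\<bar>s * i - s' * i'\<bar> \<le> 4 * e" using prod_lip[of i s' s i'] bd dd by simp
  have m2: "\<bar>i * i - i' * i'\<bar> \<le> 4 * e" using prod_lip[of i i' i i'] bd dd by simp
  have m3: "\<bar>i * r - i' * r'\<bar> \<le> 4 * e" using prod_lip[of r i' i r'] bd dd by simp
  have d4: "\<bar>s - s'\<bar> \<le> 4 * e" "\<bar>i - i'\<bar> \<le> 4 * e" "\<bar>r - r'\<bar> \<le> 4 * e" "\<bar>0::real\<bar> \<le> 4 * e"
    using dd e0 by auto
  define g where "g = (1 - p) * b + nu + delta"
  have c1: "b * (1 - s - p * i) - (beta - delta) * s * i + alpha * r - (b * (1 - s' - p * i') - (beta - delta) * s' * i' + alpha * r')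
     = (- b) * (s - s') + (- (b * p)) * (i - i') + (- (beta - delta)) * (s * i - s' * i') + alpha * (r - r')"
    by (simp add: algebra_simps)
  have c2: "(beta * s - g + delta * i) * i - (beta * s' - g + delta * i') * i'
     = beta * (s * i - s' * i') + (- g) * (i - i') + delta * (i * i - i' * i') + 0 * 0"
    by (simp add: algebra_simps)
  have c3: "nu * i - (b + alpha - delta * i) * r - (nu * i' - (b + alpha - delta * i') * r')
     = nu * (i - i') + (- (b + alpha)) * (r - r') + delta * (i * r - i' * r') + 0 * 0"
    by (simp add: algebra_simps)
  have A1: "\<bar>b * (1 - s - p * i) - (beta - delta) * s * i + alpha * r - (b * (1 - s' - p * i') - (beta - delta) * s' * i' + alpha * r')\<bar>
     \<le> (\<bar>b\<bar> + \<bar>b * p\<bar> + \<bar>beta - delta\<bar> + \<bar>alpha\<bar>) * (4 * e)"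
    unfolding c1 using abs4[OF d4(1) d4(2) m1 d4(3), of "- b" "- (b * p)" "- (beta - delta)" alpha] by (simp add: abs_minus_commute[of beta delta])
  have A2: "\<bar>(beta * s - g + delta * i) * i - (beta * s' - g + delta * i') * i'\<bar>
     \<le> (\<bar>beta\<bar> + \<bar>g\<bar> + \<bar>delta\<bar> + 0) * (4 * e)"
    unfolding c2 using abs4[OF m1 d4(2) m2 d4(4), of beta "- g" delta 0] by simp
  have A3: "\<bar>nu * i - (b + alpha - delta * i) * r - (nu * i' - (b + alpha - delta * i') * r')\<bar>
     \<le> (\<bar>nu\<bar> + \<bar>b + alpha\<bar> + \<bar>delta\<bar> + 0) * (4 * e)"
    unfolding c3 using abs4[OF d4(2) d4(3) m3 d4(4), of nu "- (b + alpha)" delta 0]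
    by (simp only: abs_minus_cancel mult_zero_left add_0_right abs_zero)
  have "norm (sirs_field b beta nu delta alpha p (s, i, r) - sirs_field b beta nu delta alpha p (s', i', r'))
     \<le> \<bar>b * (1 - s - p * i) - (beta - delta) * s * i + alpha * r - (b * (1 - s' - p * i') - (beta - delta) * s' * i' + alpha * r')\<bar>
      + \<bar>(beta * s - g + delta * i) * i - (beta * s' - g + delta * i') * i'\<bar>
      + \<bar>nu * i - (b + alpha - delta * i) * r - (nu * i' - (b + alpha - delta * i') * r')\<bar>"
    unfolding sirs_field_def g_def using norm3 by simp
  also have "\<dots> \<le> (\<bar>b\<bar> + \<bar>b * p\<bar> + \<bar>beta - delta\<bar> + \<bar>alpha\<bar>) * (4 * e) + (\<bar>beta\<bar> + \<bar>g\<bar> + \<bar>delta\<bar> + 0) * (4 * e)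
      + (\<bar>nu\<bar> + \<bar>b + alpha\<bar> + \<bar>delta\<bar> + 0) * (4 * e)"
    using A1 A2 A3 by linarith
  finally show ?thesis unfolding g_def by (simp add: algebra_simps)
qed



lemma comp_le_norm:
  fixes w :: "real \<times> real \<times> real"
  shows "\<bar>fst w\<bar> \<le> norm w" "\<bar>fst (snd w)\<bar> \<le> norm w" "\<bar>snd (snd w)\<bar> \<le> norm w"
proof -
  have "norm (fst w) \<le> norm (fst w, snd w)" by (rule norm_fst_le)
  thus "\<bar>fst w\<bar> \<le> norm w" by simp
  have a: "norm (snd w) \<le> norm (fst w, snd w)" by (rule norm_snd_le)
  have "norm (fst (snd w)) \<le> norm (fst (snd w), snd (snd w))" by (rule norm_fst_le)
  thus "\<bar>fst (snd w)\<bar> \<le> norm w" using a by simp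
  have "norm (snd (snd w)) \<le> norm (fst (snd w), snd (snd w))" by (rule norm_snd_le)
  thus "\<bar>snd (snd w)\<bar> \<le> norm w" using a by simp
qed

lemma cl_abs4: "\<bar>cl y\<bar> \<le> 4" using cl_abs[of y] by simp

lemma Pc_id: "-1 \<le> fst z \<Longrightarrow> fst z \<le> 2 \<Longrightarrow> -1 \<le> fst (snd z) \<Longrightarrow> fst (snd z) \<le> 2 \<Longrightarrow>
   -1 \<le> snd (snd z) \<Longrightarrow> snd (snd z) \<le> 2 \<Longrightarrow> Pc z = z"
  unfolding Pc_def by (simp add: cl_id)

lemma closed_D: "closed D_fra"
proof -
  have eq: "D_fra = {z. 0 \<le> fst z \<and> 0 \<le> fst (snd z) \<and> 0 \<le> snd (snd z) \<and> fst z + fst (snd z) + snd (snd z) = 1}"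
    unfolding D_fra_def by auto
  show ?thesis
    by (subst eq) (intro closed_Collect_conj closed_Collect_le closed_Collect_eq continuous_intros)
qed

lemma exists_sol:
  fixes b beta nu delta alpha p :: real
  assumes pars: "b > 0" "beta > 0" "nu > 0" "delta > 0" "alpha > 0" "0 < p" "p < 1"
  and x0: "x0 \<in> D_fra"
  shows "\<exists>x. is_solution (sirs_field b beta nu delta alpha p) x \<and> x 0 = x0"
proof -
  define F where "F = sirs_field b beta nu delta alpha p"
  define G where "G = (\<lambda>z. F (Pc z))"
  define K where "K = 4 * ((\<bar>b\<bar> + \<bar>b * p\<bar> + \<bar>beta - delta\<bar> + \<bar>alpha\<bar>) + (\<bar>beta\<bar> + \<bar>(1 - p) * b + nu + delta\<bar> + \<bar>delta\<bar> + 0)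
          + (\<bar>nu\<bar> + \<bar>b + alpha\<bar> + \<bar>delta\<bar> + 0))"
  have K0: "K \<ge> 0" unfolding K_def by simp
  have Flip: "norm (F (s, i, r) - F (s', i', r')) \<le> K * e"
    if "\<bar>s\<bar> \<le> 2" "\<bar>i\<bar> \<le> 2" "\<bar>r\<bar> \<le> 2" "\<bar>s'\<bar> \<le> 2" "\<bar>i'\<bar> \<le> 2" "\<bar>r'\<bar> \<le> 2"
      "\<bar>s - s'\<bar> \<le> e" "\<bar>i - i'\<bar> \<le> e" "\<bar>r - r'\<bar> \<le> e" for s i r s' i' r' e
    unfolding F_def K_def using F_lip[OF that] by simp
  have Pc_e: "Pc z = (cl (fst z), cl (fst (snd z)), cl (snd (snd z)))" for z unfolding Pc_def by simp
  have GL: "norm (G z - G z') \<le> (K + 1) * norm (z - z')" for z z'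
  proof -
    have "norm (G z - G z') \<le> K * norm (z - z')"
      unfolding G_def Pc_e
    proof (rule Flip)
      show "\<bar>cl (fst z) - cl (fst z')\<bar> \<le> norm (z - z')"
        using cl_lip[of "fst z" "fst z'"] comp_le_norm(1)[of "z - z'"] by simp
      show "\<bar>cl (fst (snd z)) - cl (fst (snd z'))\<bar> \<le> norm (z - z')"
        using cl_lip[of "fst (snd z)" "fst (snd z')"] comp_le_norm(2)[of "z - z'"] by simp
      show "\<bar>cl (snd (snd z)) - cl (snd (snd z'))\<bar> \<le> norm (z - z')"
        using cl_lip[of "snd (snd z)" "snd (snd z')"] comp_le_norm(3)[of "z - z'"] by simp
    qed (auto simp: cl_abs)
    also have "\<dots> \<le> (K + 1) * norm (z - z')" by (simp add: mult_right_mono)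
    finally show ?thesis .
  qed
  have GM: "norm (G z) \<le> norm (F (0, 0, 0)) + K * 4" for z
  proof -
    have "norm (G z - F (0, 0, 0)) \<le> K * 4"
      unfolding G_def Pc_e by (rule Flip) (simp_all add: cl_abs cl_abs4)
    thus ?thesis using norm_triangle_sub[of "G z" "F (0, 0, 0)"] by linarith
  qed
  obtain \<psi> where ps0: "\<psi> 0 = x0" and psd: "\<And>t. t \<ge> 0 \<Longrightarrow> (\<psi> has_vector_derivative G (\<psi> t)) (at t within {0..})"
    using picard_exists[OF GL _ GM, of x0] K0 by auto
  have cps: "continuous_on {0..} \<psi>" unfolding continuous_on_eq_continuous_within
  proof
    fix t :: real assume "t \<in> {0..}"
    thus "continuous (at t within {0..}) \<psi>" using has_vector_derivative_continuous[OF psd[of t]] by simp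
  qed
  have psat: "(\<psi> has_vector_derivative G (\<psi> t)) (at t)" if "t > 0" for t
  proof -
    have "at t within {0..} = at t" using that by (intro at_within_interior) simp
    thus ?thesis using psd[of t] that by simp
  qed
  have DPc: "Pc z = z" if "z \<in> D_fra" for z using that unfolding D_fra_def by (auto intro!: Pc_id)
  define A where "A = {t. 0 \<le> t \<and> \<psi> t \<notin> D_fra}"
  have allD: "\<psi> t \<in> D_fra" if t: "t \<ge> 0" for t
  proof (rule ccontr)
    assume "\<psi> t \<notin> D_fra"
    hence An: "A \<noteq> {}" unfolding A_def using t by auto
    have bdd: "bdd_below A" unfolding A_def by (auto intro: bdd_belowI[where m=0])
    define \<tau> where "\<tau> = Inf A"
    have tau0: "\<tau> \<ge> 0" unfolding \<tau>_def A_def using An by (intro cInf_greatest) (auto simp: A_def)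
    have before: "\<psi> s \<in> D_fra" if "0 \<le> s" "s < \<tau>" for s
    proof (rule ccontr)
      assume "\<psi> s \<notin> D_fra"
      hence "s \<in> A" unfolding A_def using that by auto
      hence "\<tau> \<le> s" unfolding \<tau>_def using bdd by (simp add: cInf_lower)
      thus False using that by simp
    qed
    have tauD: "\<psi> \<tau> \<in> D_fra"
    proof (cases "\<tau> = 0")
      case True thus ?thesis using ps0 x0 by simp
    next
      case False
      hence tp: "\<tau> > 0" using tau0 by simp
      have c: "continuous_on {0..\<tau>} \<psi>" by (rule continuous_on_subset[OF cps]) auto
      have cl: "closed ({0..\<tau>} \<inter> \<psi> -` D_fra)" by (rule continuous_closed_preimage[OF c _ closed_D]) simp
      have sub: "{0..<\<tau>} \<subseteq> {0..\<tau>} \<inter> \<psi> -` D_fra" using before by auto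
      have "closure {0..<\<tau>} \<subseteq> {0..\<tau>} \<inter> \<psi> -` D_fra" using closure_minimal[OF sub cl] .
      moreover have "\<tau> \<in> closure {0..<\<tau>}" using tp by simp
      ultimately have "\<tau> \<in> \<psi> -` D_fra" by blast
      thus ?thesis by simp
    qed
    obtain d where d: "d > 0" "\<And>s. s \<in> {0..} \<Longrightarrow> dist s \<tau> < d \<Longrightarrow> dist (\<psi> s) (\<psi> \<tau>) < 1"
      using cps tau0 unfolding continuous_on_iff by (metis atLeast_iff zero_less_one)
    have inbox: "Pc (\<psi> s) = \<psi> s" if s: "0 \<le> s" "s < \<tau> + d" for s
    proof (cases "s < \<tau>")
      case True thus ?thesis using before s DPc by auto
    next
      case False
      hence "dist s \<tau> < d" using s by (simp add: dist_real_def)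
      hence n1: "norm (\<psi> s - \<psi> \<tau>) < 1" using d(2)[of s] s by (simp add: dist_norm)
      have tD: "0 \<le> fst (\<psi> \<tau>)" "0 \<le> fst (snd (\<psi> \<tau>))" "0 \<le> snd (snd (\<psi> \<tau>))"
        "fst (\<psi> \<tau>) + fst (snd (\<psi> \<tau>)) + snd (snd (\<psi> \<tau>)) = 1"
        using tauD unfolding D_fra_def by auto
      have "\<bar>fst (\<psi> s) - fst (\<psi> \<tau>)\<bar> < 1" "\<bar>fst (snd (\<psi> s)) - fst (snd (\<psi> \<tau>))\<bar> < 1"
        "\<bar>snd (snd (\<psi> s)) - snd (snd (\<psi> \<tau>))\<bar> < 1"
        using comp_le_norm[of "\<psi> s - \<psi> \<tau>"] n1 by auto
      thus ?thesis using tD by (intro Pc_id) auto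
    qed
    have inv: "\<psi> s \<in> D_fra" if s: "0 \<le> s" "s < \<tau> + d" for s
    proof (rule invariance[where T="\<tau> + d" and x=\<psi> and b=b and beta=beta and nu=nu and delta=delta and alpha=alpha and p=p])
      show "continuous_on {0..<\<tau> + d} \<psi>" by (rule continuous_on_subset[OF cps]) auto
      fix u assume u: "0 < u" "u < \<tau> + d"
      have "G (\<psi> u) = sirs_field b beta nu delta alpha p (\<psi> u)" unfolding G_def F_def using inbox[of u] u by simp
      thus "(\<psi> has_vector_derivative sirs_field b beta nu delta alpha p (\<psi> u)) (at u)" using psat[OF u(1)] by simp
    qed (use pars x0 ps0 s in auto)
    have "\<exists>a\<in>A. a < \<tau> + d" using An bdd d(1) unfolding \<tau>_def by (subst cInf_less_iff[symmetric]) auto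
    then obtain a where "a \<in> A" "a < \<tau> + d" by blast
    thus False using inv[of a] unfolding A_def by auto
  qed
  have "is_solution (sirs_field b beta nu delta alpha p) \<psi>" unfolding is_solution_def
  proof (intro allI impI)
    fix t :: real assume "t \<ge> 0"
    thus "(\<psi> has_vector_derivative sirs_field b beta nu delta alpha p (\<psi> t)) (at t within {0..})"
      using psd[of t] DPc[OF allD] unfolding G_def F_def by simp
  qed
  thus ?thesis using ps0 by blast
qed


theorem theorem1:
  fixes b beta nu delta alpha p :: real
  assumes "b > 0" "beta > 0" "nu > 0" "delta > 0" "alpha > 0" "0 < p" "p < 1"
  defines "gamma \<equiv> (1 - p) * b + nu + delta"
  defines "R0 \<equiv> beta / gamma"
  shows "(GAS_in (sirs_field b beta nu delta alpha p) D_fra (1, 0, 0) \<longleftrightarrow> R0 \<le> 1)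
       \<and> (R0 > 1 \<longrightarrow> \<not> lyapunov_stable_in (sirs_field b beta nu delta alpha p) D_fra (1, 0, 0))"
proof -
  have bp: "(1 - p) * b > 0" using assms by simp
  have g0: "gamma > 0" unfolding gamma_def using bp assms by linarith
  have le_iff: "R0 \<le> 1 \<longleftrightarrow> beta \<le> gamma" unfolding R0_def using g0 by (simp add: divide_le_eq_1_pos)
  have gt_iff: "R0 > 1 \<longleftrightarrow> beta > gamma" unfolding R0_def using g0 by (simp add: less_divide_eq_1_pos)
  have ust: "\<not> lyapunov_stable_in (sirs_field b beta nu delta alpha p) D_fra (1, 0, 0)" if "R0 > 1"
  proof (rule unstable[OF assms(1-7)])
    show "beta > (1 - p) * b + nu + delta" using that gt_iff unfolding gamma_def by simp
    show "\<And>x0. x0 \<in> D_fra \<Longrightarrow> \<exists>x. is_solution (sirs_field b beta nu delta alpha p) x \<and> x 0 = x0"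
      by (rule exists_sol[OF assms(1-7)])
  qed
  have "GAS_in (sirs_field b beta nu delta alpha p) D_fra (1, 0, 0) \<longleftrightarrow> R0 \<le> 1"
  proof
    assume "GAS_in (sirs_field b beta nu delta alpha p) D_fra (1, 0, 0)"
    hence "lyapunov_stable_in (sirs_field b beta nu delta alpha p) D_fra (1, 0, 0)" unfolding GAS_in_def by simp
    thus "R0 \<le> 1" using ust by force
  next
    assume "R0 \<le> 1"
    hence "beta \<le> (1 - p) * b + nu + delta" using le_iff unfolding gamma_def by simp
    thus "GAS_in (sirs_field b beta nu delta alpha p) D_fra (1, 0, 0)" by (rule gas[OF assms(1-7)])
  qed
  thus ?thesis using ust by blast
qed

end
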